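(* Let $N\ge 1$ and $k\ge 1$ be integers, let $\beta>0$, and let $\psi_1,\dots,\psi_N\in\mathbb{R}$ be contribution estimates of nodes $i\in[N]$ (the quantities $\beta,\psi_i$ may depend on an accuracy parameter $\epsilon>0$). Define $\varrho_i=\exp(\psi_i/\beta)/\sum_{i'\in[N]}\exp(\psi_{i'}/\beta)$, $q_i=1-(1-\varrho_i)^k$, $\Gamma_i=\sum_{\gamma=0}^{\infty}\gamma\,(1-q_i)^{\gamma}=(1-q_i)/q_i^2$, and $C_i=c(\epsilon)+\Gamma_i$, where $c(\epsilon)=\mathcal{O}(1/\epsilon)$ is common to all nodes. Let $i_*\in\arg\min_{i\in[N]}\psi_i$. If $\Gamma_{i_*}=\mathcal{O}(1/\epsilon)$, then $C_i=\mathcal{O}(1/\epsilon)$ for all $i\in[N]$.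
   Context: Setting: federated learning with $N$ nodes; after a contribution-evaluation phase, each node $i$ has a contribution estimate $\psi_i$. In each subsequent iteration $k$ nodes are sampled with replacement according to $(\varrho_i)$ and synchronize with the latest global model. $\Gamma_i$ is node $i$'s expected staleness (iterations since last synchronization), $c(\epsilon)$ is the expected number of iterations for the global model to reach $\epsilon$-accuracy (of order $\mathcal{O}(1/\epsilon)$ as $\epsilon\to 0$), and $C_i=c(\epsilon)+\Gamma_i$ is node $i$'s expected convergence complexity. Asymptotic notation is as $\epsilon\to 0$. *)

theory Defs
  imports "HOL-Analysis.Analysis" "HOL-Library.Landau_Symbols"
begin

definition rho :: "nat \<Rightarrow> real \<Rightarrow> (nat \<Rightarrow> real) \<Rightarrow> nat \<Rightarrow> real" where
  "rho N beta psi i = exp (psi i / beta) / (\<Sum>j\<in>{1..N}. exp (psi j / beta))"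

text \<open>Probability that node i is sampled at least once among k draws with replacement.\<close>
definition qprob :: "nat \<Rightarrow> nat \<Rightarrow> real \<Rightarrow> (nat \<Rightarrow> real) \<Rightarrow> nat \<Rightarrow> real" where
  "qprob N k beta psi i = 1 - (1 - rho N beta psi i) ^ k"

definition Gamma :: "nat \<Rightarrow> nat \<Rightarrow> real \<Rightarrow> (nat \<Rightarrow> real) \<Rightarrow> nat \<Rightarrow> real" where
  "Gamma N k beta psi i = (\<Sum>\<gamma>. real \<gamma> * (1 - qprob N k beta psi i) ^ \<gamma>)"

definition Cplx :: "real \<Rightarrow> nat \<Rightarrow> nat \<Rightarrow> real \<Rightarrow> (nat \<Rightarrow> real) \<Rightarrow> nat \<Rightarrow> real" where
  "Cplx c N k beta psi i = c + Gamma N k beta psi i"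

end

theory Submission
  imports Defs
begin

lemma summ_nx:
  fixes x :: real
  assumes "0 \<le> x" "x < 1"
  shows "summable (\<lambda>n. real n * x ^ n)"
proof -
  have "summable (\<lambda>n. of_nat (Suc n) * x ^ n)"
    using geometric_deriv_sums[of x] assms by (auto simp: sums_iff)
  then show ?thesis
    by (rule summable_comparison_test[rotated]) (auto intro!: exI[of _ 0] mult_right_mono simp: assms)
qed

lemma suminf_nx_mono:
  fixes x y :: real
  assumes "0 \<le> x" "x \<le> y" "y < 1"
  shows "(\<Sum>n. real n * x ^ n) \<le> (\<Sum>n. real n * y ^ n)" "0 \<le> (\<Sum>n. real n * x ^ n)"
proof -
  show "(\<Sum>n. real n * x ^ n) \<le> (\<Sum>n. real n * y ^ n)"
    using assms by (intro suminf_le) (auto intro!: mult_left_mono power_mono summ_nx)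
  show "0 \<le> (\<Sum>n. real n * x ^ n)"
    using assms by (intro suminf_nonneg) (auto intro!: summ_nx)
qed

lemma rho_props:
  assumes "b > 0" "i \<in> {1..N}" "j \<in> {1..N}" "psi j \<le> psi i"
  shows "0 < rho N b psi j" "rho N b psi j \<le> rho N b psi i" "rho N b psi i \<le> 1"
proof -
  have S: "exp (psi i / b) \<le> (\<Sum>j\<in>{1..N}. exp (psi j / b))"
    using assms(2) by (intro member_le_sum) auto
  have Spos: "0 < (\<Sum>j\<in>{1..N}. exp (psi j / b))"
    using assms(2) by (intro sum_pos) auto
  show "0 < rho N b psi j" unfolding rho_def using Spos by simp
  have "exp (psi j / b) \<le> exp (psi i / b)"
    using assms(1,4) by (simp add: divide_right_mono)
  then show "rho N b psi j \<le> rho N b psi i" unfolding rho_def using Spos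
    by (simp add: divide_right_mono)
  show "rho N b psi i \<le> 1" unfolding rho_def using S Spos by simp
qed

lemma Gamma_le:
  assumes "b > 0" "i \<in> {1..N}" "j \<in> {1..N}" "psi j \<le> psi i" "k \<ge> 1"
  shows "Gamma N k b psi i \<le> Gamma N k b psi j" "0 \<le> Gamma N k b psi i"
proof -
  note r = rho_props[OF assms(1-4)]
  define x where "x = (1 - rho N b psi i) ^ k"
  define y where "y = (1 - rho N b psi j) ^ k"
  have x0: "0 \<le> x" unfolding x_def using r by simp
  have xy: "x \<le> y" unfolding x_def y_def using r by (intro power_mono) auto
  have "(1 - rho N b psi j) ^ k \<le> (1 - rho N b psi j) ^ 1"
    using r assms(5) by (intro power_decreasing) auto
  then have y1: "y < 1" unfolding y_def using r by simp
  have gi: "Gamma N k b psi i = (\<Sum>n. real n * x ^ n)"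
    unfolding Gamma_def qprob_def x_def by simp
  have gj: "Gamma N k b psi j = (\<Sum>n. real n * y ^ n)"
    unfolding Gamma_def qprob_def y_def by simp
  show "Gamma N k b psi i \<le> Gamma N k b psi j" "0 \<le> Gamma N k b psi i"
    using suminf_nx_mono[OF x0 xy y1] gi gj by auto
qed

theorem proposition3:
  fixes N k :: nat
    and beta c :: "real \<Rightarrow> real"
    and psi :: "real \<Rightarrow> nat \<Rightarrow> real"
    and istar :: "real \<Rightarrow> nat"
  assumes "N \<ge> 1" and "k \<ge> 1"
    and "\<forall>\<epsilon>>0. beta \<epsilon> > 0"
    and "c \<in> O[at_right 0](\<lambda>\<epsilon>. 1 / \<epsilon>)"
    and "\<forall>\<epsilon>>0. istar \<epsilon> \<in> {1..N} \<and> (\<forall>i\<in>{1..N}. psi \<epsilon> (istar \<epsilon>) \<le> psi \<epsilon> i)"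
    and "(\<lambda>\<epsilon>. Gamma N k (beta \<epsilon>) (psi \<epsilon>) (istar \<epsilon>)) \<in> O[at_right 0](\<lambda>\<epsilon>. 1 / \<epsilon>)"
  shows "\<forall>i\<in>{1..N}. (\<lambda>\<epsilon>. Cplx (c \<epsilon>) N k (beta \<epsilon>) (psi \<epsilon>) i) \<in> O[at_right 0](\<lambda>\<epsilon>. 1 / \<epsilon>)"
proof
  fix i assume i: "i \<in> {1..N}"
  have ev: "eventually (\<lambda>e. e > (0::real)) (at_right 0)"
    by (simp add: eventually_at_right_less)
  have "(\<lambda>\<epsilon>. Gamma N k (beta \<epsilon>) (psi \<epsilon>) i) \<in> O[at_right 0](\<lambda>\<epsilon>. Gamma N k (beta \<epsilon>) (psi \<epsilon>) (istar \<epsilon>))"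
  proof (rule landau_o.big_mono)
    show "\<forall>\<^sub>F x in at_right 0. norm (Gamma N k (beta x) (psi x) i) \<le> norm (Gamma N k (beta x) (psi x) (istar x))"
      using ev
    proof eventually_elim
      case (elim e)
      have "beta e > 0" "istar e \<in> {1..N}" "psi e (istar e) \<le> psi e i"
        using assms(3,5) elim i by auto
      note g = Gamma_le[OF this(1) i this(2,3) assms(2)]
      have "0 \<le> Gamma N k (beta e) (psi e) (istar e)" using g by linarith
      then show ?case using g by simp
    qed
  qed
  then have "(\<lambda>\<epsilon>. Gamma N k (beta \<epsilon>) (psi \<epsilon>) i) \<in> O[at_right 0](\<lambda>\<epsilon>. 1 / \<epsilon>)"
    using assms(6) by (rule landau_o.big_trans)
  then show "(\<lambda>\<epsilon>. Cplx (c \<epsilon>) N k (beta \<epsilon>) (psi \<epsilon>) i) \<in> O[at_right 0](\<lambda>\<epsilon>. 1 / \<epsilon>)"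
    unfolding Cplx_def using assms(4) by (intro sum_in_bigo)
qed

end
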